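(* Let $(M,g)$ be a pseudo-Riemannian manifold of dimension $n\ge3$ and $\nabla$ a torsion free, Ricci symmetric connection on $M$ with curvature tensor $R$. Then $(M,g,\nabla)$ is equiaffine Einstein if and only if $\pi_2(R)=0=\pi_3(R)$ at every point.
   Context: The curvature operator is $\mathcal{R}(u,v)=\nabla_u\nabla_v-\nabla_v\nabla_u-\nabla_{[u,v]}$ and $R(x,y,z,w):=g(\mathcal{R}(x,y)z,w)$. $Ric(x,y):=\mathrm{Tr}(z\mapsto\mathcal{R}(z,x)y)=g^{ij}R(e_i,x,y,e_j)$; $\nabla$ is Ricci symmetric if $Ric$ is symmetric; $\tau:=g^{il}g^{jk}R_{ijkl}$ (the $g$-trace of $Ric$). $(M,g,\nabla)$ is equiaffine Einstein if $Ric=\lambda g$ for some smooth function $\lambda$. For bilinear forms $h,k$: $Sh(x,y)=\tfrac12[h(x,y)+h(y,x)]$, $\Lambda h(x,y)=\tfrac12[h(x,y)-h(y,x)]$, $(h\cdot k)(x,y,z,w)=h(x,y)k(z,w)$, $(h\wedge k)(x,y,z,w)=h(x,z)k(y,w)-h(y,z)k(x,w)$. Pointwise, $\pi_2(R):=\tfrac1{n-1}\big[\tfrac{\tau}{n}g-S\,Ric\big]\wedge g$ and $\pi_3(R):=-\tfrac1{n+1}\big[2\Lambda Ric\cdot g+\Lambda Ric\wedge g\big]$. *)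

theory Defs
  imports "HOL-Analysis.Analysis"
begin

text \<open>At a point, the tangent space is identified with
  real^'n via a basis e_i; (0,4)-tensors are given by their components
  T i j k l = T(e_i,e_j,e_k,e_l); bilinear forms by components h i j.\<close>

type_synonym 'n bform = "'n \<Rightarrow> 'n \<Rightarrow> real"
type_synonym 'n tensor4 = "'n \<Rightarrow> 'n \<Rightarrow> 'n \<Rightarrow> 'n \<Rightarrow> real"

definition pseudo_metric :: "real^'n^'n \<Rightarrow> bool" where
  "pseudo_metric g \<longleftrightarrow> transpose g = g \<and> invertible g"

definition ginv :: "real^'n^'n \<Rightarrow> 'n::finite bform" where
  "ginv g i j = matrix_inv g $ i $ j"

definition gform :: "real^'n^'n \<Rightarrow> 'n bform" where
  "gform g i j = g $ i $ j"

text \<open>Algebraic identities satisfied by R(x,y,z,w) = g(R(x,y)z,w) for the curvature of a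
  torsion free connection: skew symmetry in (x,y) and the first Bianchi identity.\<close>
definition torsion_free_curvature :: "'n tensor4 \<Rightarrow> bool" where
  "torsion_free_curvature R \<longleftrightarrow>
     (\<forall>x y z w. R x y z w = - R y x z w) \<and>
     (\<forall>x y z w. R x y z w + R y z x w + R z x y w = 0)"

definition ricci :: "real^'n^'n \<Rightarrow> 'n::finite tensor4 \<Rightarrow> 'n bform" where
  "ricci g R x y = (\<Sum>i\<in>UNIV. \<Sum>j\<in>UNIV. ginv g i j * R i x y j)"

definition ricci_symmetric :: "real^'n^'n \<Rightarrow> 'n::finite tensor4 \<Rightarrow> bool" where
  "ricci_symmetric g R \<longleftrightarrow> (\<forall>x y. ricci g R x y = ricci g R y x)"

definition scal :: "real^'n^'n \<Rightarrow> 'n::finite tensor4 \<Rightarrow> real" where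
  "scal g R = (\<Sum>i\<in>UNIV. \<Sum>j\<in>UNIV. \<Sum>k\<in>UNIV. \<Sum>l\<in>UNIV.
                 ginv g i l * ginv g j k * R i j k l)"

definition symp :: "'n bform \<Rightarrow> 'n bform" where
  "symp h x y = (h x y + h y x) / 2"

definition altp :: "'n bform \<Rightarrow> 'n bform" where
  "altp h x y = (h x y - h y x) / 2"

definition dotp :: "'n bform \<Rightarrow> 'n bform \<Rightarrow> 'n tensor4" where
  "dotp h k x y z w = h x y * k z w"

definition wedgep :: "'n bform \<Rightarrow> 'n bform \<Rightarrow> 'n tensor4" where
  "wedgep h k x y z w = h x z * k y w - h y z * k x w"

definition pi2 :: "real^'n^'n \<Rightarrow> 'n::finite tensor4 \<Rightarrow> 'n tensor4" where
  "pi2 g R = (\<lambda>x y z w. (1 / (real CARD('n) - 1)) *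
      wedgep (\<lambda>a b. scal g R / real CARD('n) * gform g a b - symp (ricci g R) a b)
             (gform g) x y z w)"

definition pi3 :: "real^'n^'n \<Rightarrow> 'n::finite tensor4 \<Rightarrow> 'n tensor4" where
  "pi3 g R = (\<lambda>x y z w. - (1 / (real CARD('n) + 1)) *
      (2 * dotp (altp (ricci g R)) (gform g) x y z w
         + wedgep (altp (ricci g R)) (gform g) x y z w))"

definition equiaffine_einstein ::
    "'p set \<Rightarrow> ('p \<Rightarrow> real^'n^'n) \<Rightarrow> ('p \<Rightarrow> 'n::finite tensor4) \<Rightarrow> bool" where
  "equiaffine_einstein M g R \<longleftrightarrow>
     (\<exists>lam::'p \<Rightarrow> real. \<forall>p\<in>M. \<forall>x y. ricci (g p) (R p) x y = lam p * gform (g p) x y)"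

end

theory Submission
  imports Defs
begin

lemma inv_prop:
  fixes G :: "real^'n::finite^'n"
  assumes "invertible G"
  shows "G ** matrix_inv G = mat 1" "matrix_inv G ** G = mat 1"
  using someI_ex[OF assms[unfolded invertible_def]] unfolding matrix_inv_def by auto

lemma inv_r:
  fixes G :: "real^'n::finite^'n"
  assumes "invertible G"
  shows "(\<Sum>k\<in>UNIV. G$i$k * ginv G k j) = (if i = j then 1 else 0)"
proof -
  have "(G ** matrix_inv G)$i$j = (if i = j then 1 else 0)" using inv_prop(1)[OF assms] by (simp add: mat_def)
  thus ?thesis by (simp add: matrix_matrix_mult_def ginv_def)
qed

lemma inv_l:
  fixes G :: "real^'n::finite^'n"
  assumes "invertible G"
  shows "(\<Sum>k\<in>UNIV. ginv G i k * G$k$j) = (if i = j then 1 else 0)"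
proof -
  have "(matrix_inv G ** G)$i$j = (if i = j then 1 else 0)" using inv_prop(2)[OF assms] by (simp add: mat_def)
  thus ?thesis by (simp add: matrix_matrix_mult_def ginv_def)
qed

lemma sym_g:
  fixes G :: "real^'n::finite^'n"
  assumes "pseudo_metric G"
  shows "gform G x y = gform G y x"
  using assms unfolding pseudo_metric_def gform_def
  by (metis transpose_def vec_lambda_beta)

lemma trace_n:
  fixes G :: "real^'n::finite^'n"
  assumes "pseudo_metric G"
  shows "(\<Sum>j\<in>UNIV. \<Sum>k\<in>UNIV. ginv G j k * gform G j k) = real CARD('n)"
proof -
  have s: "G$j$k = G$k$j" for j k using assms unfolding pseudo_metric_def
    by (metis transpose_def vec_lambda_beta)
  have "(\<Sum>j\<in>UNIV. \<Sum>k\<in>UNIV. ginv G j k * gform G j k) = (\<Sum>j\<in>(UNIV::'n set). 1)"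
    apply (rule sum.cong[OF refl])
    using inv_l[of G] assms unfolding pseudo_metric_def gform_def by (simp add: s)
  thus ?thesis by simp
qed

lemma trace_n2:
  fixes G :: "real^'n::finite^'n"
  assumes "pseudo_metric G"
  shows "(\<Sum>y\<in>UNIV. \<Sum>w\<in>UNIV. gform G y w * ginv G w y) = real CARD('n)"
proof -
  have "(\<Sum>y\<in>UNIV. \<Sum>w\<in>UNIV. gform G y w * ginv G w y) = (\<Sum>j\<in>(UNIV::'n set). 1)"
    apply (rule sum.cong[OF refl])
    using inv_r[of G] assms unfolding pseudo_metric_def gform_def by simp
  thus ?thesis by simp
qed

lemma scal_ricci:
  "scal G R = (\<Sum>j\<in>UNIV. \<Sum>k\<in>UNIV. ginv G j k * ricci G R j k)"
proof -
  have "(\<Sum>j\<in>UNIV. \<Sum>k\<in>UNIV. ginv G j k * ricci G R j k)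
     = (\<Sum>j\<in>UNIV. \<Sum>k\<in>UNIV. \<Sum>i\<in>UNIV. \<Sum>l\<in>UNIV. ginv G i l * ginv G j k * R i j k l)"
    unfolding ricci_def sum_distrib_left by (simp add: mult_ac)
  also have "\<dots> = (\<Sum>j\<in>UNIV. \<Sum>i\<in>UNIV. \<Sum>k\<in>UNIV. \<Sum>l\<in>UNIV. ginv G i l * ginv G j k * R i j k l)"
    by (rule sum.cong[OF refl], rule sum.swap)
  also have "\<dots> = scal G R" unfolding scal_def by (rule sum.swap)
  finally show ?thesis ..
qed

lemma wedge_zero:
  fixes G :: "real^'n::finite^'n"
  assumes "pseudo_metric G" "CARD('n) \<ge> 2"
    and w: "\<forall>x y z w. wedgep h (gform G) x y z w = 0"
  shows "h x z = 0"
proof -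
  have "0 = (\<Sum>y\<in>UNIV. \<Sum>w\<in>UNIV. wedgep h (gform G) x y z w * ginv G w y)"
    using w by simp
  also have "\<dots> = (\<Sum>y\<in>UNIV. \<Sum>w\<in>UNIV. h x z * (gform G y w * ginv G w y))
      - (\<Sum>y\<in>UNIV. h y z * (\<Sum>w\<in>UNIV. gform G x w * ginv G w y))"
    unfolding wedgep_def sum_subtractf[symmetric] sum_distrib_left
    by (simp add: algebra_simps)
  also have "\<dots> = h x z * real CARD('n) - h x z"
  proof -
    have d: "(\<Sum>y\<in>UNIV. h y z * (if x = y then 1 else 0)) = h x z"
      by (simp add: if_distrib[of "\<lambda>t. h _ z * t"] sum.delta cong: if_cong)
    show ?thesis
    using trace_n2[OF assms(1)] inv_r[of G] assms(1) d
    by (simp add: sum_distrib_left[symmetric] pseudo_metric_def gform_def)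
  qed
  finally have "h x z * (real CARD('n) - 1) = 0" by (simp add: algebra_simps)
  thus ?thesis using assms(2) by simp
qed


theorem lemma8p2:
  fixes M :: "'p set"
    and g :: "'p \<Rightarrow> real^'n::finite^'n"
    and R :: "'p \<Rightarrow> 'n tensor4"
  assumes dim: "CARD('n) \<ge> 3"
    and metric: "\<forall>p\<in>M. pseudo_metric (g p)"
    and torsion_free: "\<forall>p\<in>M. torsion_free_curvature (R p)"
    and ric_sym: "\<forall>p\<in>M. ricci_symmetric (g p) (R p)"
  shows "equiaffine_einstein M g R \<longleftrightarrow>
         (\<forall>p\<in>M. pi2 (g p) (R p) = (\<lambda>x y z w. 0) \<and> pi3 (g p) (R p) = (\<lambda>x y z w. 0))"
proof
  assume "equiaffine_einstein M g R"
  then obtain lam where L: "\<forall>p\<in>M. \<forall>x y. ricci (g p) (R p) x y = lam p * gform (g p) x y"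
    unfolding equiaffine_einstein_def by blast
  show "\<forall>p\<in>M. pi2 (g p) (R p) = (\<lambda>x y z w. 0) \<and> pi3 (g p) (R p) = (\<lambda>x y z w. 0)"
  proof (intro ballI conjI)
    fix p assume p: "p \<in> M"
    have Lp: "ricci (g p) (R p) x y = lam p * gform (g p) x y" for x y using L p by blast
    have "scal (g p) (R p) = lam p * real CARD('n)"
      unfolding scal_ricci Lp using trace_n[of "g p"] metric p
      by (simp add: sum_distrib_left[symmetric] mult_ac)
    hence sc: "scal (g p) (R p) / real CARD('n) = lam p" by simp
    have alt: "altp (ricci (g p) (R p)) = (\<lambda>x y. 0)"
      using ric_sym p unfolding ricci_symmetric_def altp_def by (auto simp: fun_eq_iff)
    have gs: "gform (g p) x y = gform (g p) y x" for x y using metric p sym_g by blast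
    have sy: "symp (ricci (g p) (R p)) x y = lam p * gform (g p) x y" for x y
    proof -
      have "gform (g p) y x = gform (g p) x y" by (rule gs)
      thus ?thesis unfolding symp_def Lp by simp
    qed
    show "pi2 (g p) (R p) = (\<lambda>x y z w. 0)"
      unfolding pi2_def sc sy by (simp add: wedgep_def)
    show "pi3 (g p) (R p) = (\<lambda>x y z w. 0)"
      unfolding pi3_def alt by (simp add: wedgep_def dotp_def)
  qed
next
  assume H: "\<forall>p\<in>M. pi2 (g p) (R p) = (\<lambda>x y z w. 0) \<and> pi3 (g p) (R p) = (\<lambda>x y z w. 0)"
  show "equiaffine_einstein M g R"
    unfolding equiaffine_einstein_def
  proof (intro exI ballI allI)
    fix p x y assume p: "p \<in> M"
    define h where "h = (\<lambda>a b. scal (g p) (R p) / real CARD('n) * gform (g p) a b - symp (ricci (g p) (R p)) a b)"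
    have n1: "1 / (real CARD('n) - 1) \<noteq> 0" using dim by simp
    have "\<forall>x y z w. wedgep h (gform (g p)) x y z w = 0"
    proof (intro allI)
      fix x y z w
      have "pi2 (g p) (R p) x y z w = 0" using H p by simp
      thus "wedgep h (gform (g p)) x y z w = 0" using n1 unfolding pi2_def h_def by simp
    qed
    hence "h x y = 0" using wedge_zero[of "g p"] metric p dim by force
    moreover have "symp (ricci (g p) (R p)) x y = ricci (g p) (R p) x y"
      using ric_sym p unfolding ricci_symmetric_def symp_def by auto
    ultimately show "ricci (g p) (R p) x y = scal (g p) (R p) / real CARD('n) * gform (g p) x y"
      unfolding h_def by simp
  qed
qed

end
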